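(* Fix $\varepsilon\in\{1,-1\}$ and $m\in\{1,2,5,7,8,10,11,13,14,16,17,19,22,23\}$. There are infinitely many positive integers $n$ with $\delta_m(n)$ squarefree, and for every nonnegative integer $n$ with $\delta_m(n)$ squarefree the curve $E_{m,n}$ is an elliptic curve over $\mathbb{Q}$ satisfying: (1) $E_{m,n}\cong C/\langle P\rangle$ for some elliptic curve $C/\mathbb{Q}$ with a rational point $P$ of order $3$; (2) $E_{m,n}$ is semistable; (3) $3$ is a prime of good reduction for $E_{m,n}$; (4) $3\nmid\mathrm{ord}_v(\Delta_{E_{m,n}})$ for every prime $v$ of bad reduction of $E_{m,n}$.
   Context: Let $f_m(n)=62208n^2+(5184m-432\varepsilon)n+(108m^2-18\varepsilon m+1)$; $i=1$ if $m$ odd, $i=2$ if $m$ even and $m\ne8,16$, $i=4$ if $m\in\{8,16\}$; $\delta_m(n)=2^{1-i}(m+24n)f_m(n)$. Put $A=18(m+24n)-\varepsilon$, $B=4\varepsilon/9$, $D=-3$, $r=1/3+A^2$, $H(m,n)=\frac1{16}(2ABD+2A^2Dr+3r^2)$, $J(m,n)=\frac1{64}(B^2D+2ABDr+A^2Dr^2+r^3)$ (these are integers), and $E_{m,n}:y^2+xy=x^3+H(m,n)x+J(m,n)$. $\Delta_{E_{m,n}}$ is its minimal discriminant. *)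

theory Defs
  imports Complex_Main "HOL-Computational_Algebra.Squarefree" "HOL-Computational_Algebra.Primes"
begin

text \<open>A Weierstrass equation y^2 + a1 x y + a3 y = x^3 + a2 x^2 + a4 x + a6 over Q.\<close>
record wcurve =
  a1 :: rat
  a2 :: rat
  a3 :: rat
  a4 :: rat
  a6 :: rat

definition b2 :: "wcurve \<Rightarrow> rat" where "b2 E = a1 E ^ 2 + 4 * a2 E"
definition b4 :: "wcurve \<Rightarrow> rat" where "b4 E = 2 * a4 E + a1 E * a3 E"
definition b6 :: "wcurve \<Rightarrow> rat" where "b6 E = a3 E ^ 2 + 4 * a6 E"
definition b8 :: "wcurve \<Rightarrow> rat" where
  "b8 E = a1 E ^ 2 * a6 E + 4 * a2 E * a6 E - a1 E * a3 E * a4 E + a2 E * a3 E ^ 2 - a4 E ^ 2"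
definition c4 :: "wcurve \<Rightarrow> rat" where "c4 E = b2 E ^ 2 - 24 * b4 E"
definition disc :: "wcurve \<Rightarrow> rat" where
  "disc E = - (b2 E ^ 2) * b8 E - 8 * b4 E ^ 3 - 27 * b6 E ^ 2 + 9 * b2 E * b4 E * b6 E"

definition elliptic :: "wcurve \<Rightarrow> bool" where "elliptic E \<longleftrightarrow> disc E \<noteq> 0"

text \<open>Isomorphism over Q: E' is obtained from E by an admissible change of variables
  x = u^2 x' + r, y = u^3 y' + s u^2 x' + t with u,r,s,t rational, u nonzero.\<close>
definition iso_Q :: "wcurve \<Rightarrow> wcurve \<Rightarrow> bool" where
  "iso_Q E E' \<longleftrightarrow> (\<exists>u r s t :: rat. u \<noteq> 0 \<and>
     u * a1 E' = a1 E + 2 * s \<and>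
     u ^ 2 * a2 E' = a2 E - s * a1 E + 3 * r - s ^ 2 \<and>
     u ^ 3 * a3 E' = a3 E + r * a1 E + 2 * t \<and>
     u ^ 4 * a4 E' = a4 E - s * a3 E + 2 * r * a2 E - (t + r * s) * a1 E + 3 * r ^ 2 - 2 * s * t \<and>
     u ^ 6 * a6 E' = a6 E + r * a4 E + r ^ 2 * a2 E + r ^ 3 - t * a3 E - t ^ 2 - r * t * a1 E)"

datatype pt = Inf | Aff rat rat

fun on_curve :: "wcurve \<Rightarrow> pt \<Rightarrow> bool" where
  "on_curve E Inf = True"
| "on_curve E (Aff x y) \<longleftrightarrow>
     y ^ 2 + a1 E * x * y + a3 E * y = x ^ 3 + a2 E * x ^ 2 + a4 E * x + a6 E"

text \<open>Chord-tangent addition (Silverman, Algorithm III.2.3).\<close>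
fun padd :: "wcurve \<Rightarrow> pt \<Rightarrow> pt \<Rightarrow> pt" where
  "padd E Inf Q = Q"
| "padd E P Inf = P"
| "padd E (Aff x1 y1) (Aff x2 y2) =
    (if x1 = x2 \<and> y1 + y2 + a1 E * x2 + a3 E = 0 then Inf
     else
       (let lam = (if x1 = x2
                   then (3 * x1 ^ 2 + 2 * a2 E * x1 + a4 E - a1 E * y1) / (2 * y1 + a1 E * x1 + a3 E)
                   else (y2 - y1) / (x2 - x1));
            nu = (if x1 = x2
                  then (- (x1 ^ 3) + a4 E * x1 + 2 * a6 E - a3 E * y1) / (2 * y1 + a1 E * x1 + a3 E)
                  else (y1 * x2 - y2 * x1) / (x2 - x1));
            x3 = lam ^ 2 + a1 E * lam - a2 E - x1 - x2;
            y3 = - (lam + a1 E) * x3 - nu - a3 E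
        in Aff x3 y3))"

fun pmul :: "wcurve \<Rightarrow> nat \<Rightarrow> pt \<Rightarrow> pt" where
  "pmul E 0 P = Inf"
| "pmul E (Suc k) P = padd E P (pmul E k P)"

definition point_order :: "wcurve \<Rightarrow> pt \<Rightarrow> nat" where
  "point_order E P = (if \<exists>k>0. pmul E k P = Inf then LEAST k. k > 0 \<and> pmul E k P = Inf else 0)"

text \<open>For P = (x0,y0) of order 3 on C, the quotient C/<P> is (up to Q-isomorphism) the curve
  given by Velu's formulas: with gx = 3x0^2 + 2a2 x0 + a4 - a1 y0, gy = -2y0 - a1 x0 - a3,
  t = 2 gx - a1 gy, w = gy^2 + x0 t, the quotient is
  [a1, a2, a3, a4 - 5t, a6 - b2 t - 7w].\<close>
fun velu3 :: "wcurve \<Rightarrow> pt \<Rightarrow> wcurve" where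
  "velu3 C Inf = C"
| "velu3 C (Aff x0 y0) =
    (let gx = 3 * x0 ^ 2 + 2 * a2 C * x0 + a4 C - a1 C * y0;
         gy = - 2 * y0 - a1 C * x0 - a3 C;
         t = 2 * gx - a1 C * gy;
         w = gy ^ 2 + x0 * t
     in \<lparr>a1 = a1 C, a2 = a2 C, a3 = a3 C, a4 = a4 C - 5 * t, a6 = a6 C - b2 C * t - 7 * w\<rparr>)"

definition integral_model :: "wcurve \<Rightarrow> bool" where
  "integral_model E \<longleftrightarrow> a1 E \<in> \<int> \<and> a2 E \<in> \<int> \<and> a3 E \<in> \<int> \<and> a4 E \<in> \<int> \<and> a6 E \<in> \<int>"

definition minimal_model :: "wcurve \<Rightarrow> wcurve \<Rightarrow> bool" where
  "minimal_model E M \<longleftrightarrow> integral_model M \<and> iso_Q E M \<and>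
     (\<forall>M'. integral_model M' \<and> iso_Q E M' \<longrightarrow> \<bar>disc M\<bar> \<le> \<bar>disc M'\<bar>)"

definition min_model :: "wcurve \<Rightarrow> wcurve" where
  "min_model E = (SOME M. minimal_model E M)"

text \<open>Minimal discriminant (an integer, as the minimal model is integral).\<close>
definition min_disc :: "wcurve \<Rightarrow> int" where
  "min_disc E = \<lfloor>disc (min_model E)\<rfloor>"

definition min_c4 :: "wcurve \<Rightarrow> int" where
  "min_c4 E = \<lfloor>c4 (min_model E)\<rfloor>"

definition good_reduction :: "wcurve \<Rightarrow> int \<Rightarrow> bool" where
  "good_reduction E p \<longleftrightarrow> \<not> p dvd min_disc E"

definition bad_reduction :: "wcurve \<Rightarrow> int \<Rightarrow> bool" where
  "bad_reduction E p \<longleftrightarrow> p dvd min_disc E"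

definition multiplicative_reduction :: "wcurve \<Rightarrow> int \<Rightarrow> bool" where
  "multiplicative_reduction E p \<longleftrightarrow> p dvd min_disc E \<and> \<not> p dvd min_c4 E"

definition semistable :: "wcurve \<Rightarrow> bool" where
  "semistable E \<longleftrightarrow> (\<forall>p::int. prime p \<longrightarrow> good_reduction E p \<or> multiplicative_reduction E p)"

definition idx :: "int \<Rightarrow> nat" where
  "idx m = (if odd m then 1 else if m = 8 \<or> m = 16 then 4 else 2)"

definition f_m :: "int \<Rightarrow> int \<Rightarrow> int \<Rightarrow> int" where
  "f_m \<epsilon> m n = 62208 * n ^ 2 + (5184 * m - 432 * \<epsilon>) * n + (108 * m ^ 2 - 18 * \<epsilon> * m + 1)"

text \<open>delta_m(n) = 2^(1-i) (m+24n) f_m(n); the division is exact for the m considered.\<close>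
definition delta_m :: "int \<Rightarrow> int \<Rightarrow> int \<Rightarrow> int" where
  "delta_m \<epsilon> m n = ((m + 24 * n) * f_m \<epsilon> m n) div (2 ^ (idx m - 1))"

definition H_mn :: "int \<Rightarrow> int \<Rightarrow> int \<Rightarrow> rat" where
  "H_mn \<epsilon> m n =
    (let A = of_int (18 * (m + 24 * n) - \<epsilon>) :: rat; B = 4 * of_int \<epsilon> / 9 :: rat; D = -3 :: rat;
         r = 1/3 + A ^ 2
     in (2 * A * B * D + 2 * A ^ 2 * D * r + 3 * r ^ 2) / 16)"

definition J_mn :: "int \<Rightarrow> int \<Rightarrow> int \<Rightarrow> rat" where
  "J_mn \<epsilon> m n =
    (let A = of_int (18 * (m + 24 * n) - \<epsilon>) :: rat; B = 4 * of_int \<epsilon> / 9 :: rat; D = -3 :: rat;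
         r = 1/3 + A ^ 2
     in (B ^ 2 * D + 2 * A * B * D * r + A ^ 2 * D * r ^ 2 + r ^ 3) / 64)"

definition E_mn :: "int \<Rightarrow> int \<Rightarrow> int \<Rightarrow> wcurve" where
  "E_mn \<epsilon> m n = \<lparr>a1 = 1, a2 = 0, a3 = 0, a4 = H_mn \<epsilon> m n, a6 = J_mn \<epsilon> m n\<rparr>"

end

theory Submission
  imports Defs "HOL-Real_Asymp.Real_Asymp"
begin



definition Hi :: "int \<Rightarrow> int \<Rightarrow> int" where
 "Hi e L = (L*(21*e - 729*L)) div 2 + 4374*e*L^3 - 19683*L^4"
definition Ji :: "int \<Rightarrow> int \<Rightarrow> int" where
 "Ji e L = (8*e*L - 567*L^2 + 15066*e*L^3 - 203391*L^4) div 4 + 354294*e*L^5 - 1062882*L^6"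

lemma even_H: "odd (e::int) \<Longrightarrow> even (L*(21*e - 729*L))"
  by (cases "even L") auto

lemma four_J: fixes e L :: int assumes "e = 1 \<or> e = -1" shows "4 dvd (8*e*L - 567*L^2 + 15066*e*L^3 - 203391*L^4)"
proof (cases "even L")
  case True then obtain k where k: "L = 2*k" by auto
  show ?thesis unfolding k by (rule dvdI[where k="4*e*k - 567*k^2 + 30132*e*k^3 - 813564*k^4"]) (simp add: algebra_simps power_def)
next
  case False then obtain k where k: "L = 2*k+1" by (metis oddE)
  from assms show ?thesis
  proof
    assume "e = 1" thus ?thesis unfolding k by (intro dvdI[where k="2*(2*k+1) + (2*k+1)^2 * (-47223 + 7533*k - 203391*k^2 - 203391*k)"]) (simp add: algebra_simps power_def)
  next
    assume "e = -1" thus ?thesis unfolding k by (intro dvdI[where k="-2*(2*k+1) + (2*k+1)^2 * (-54756 - 7533*k - 203391*k^2 - 203391*k)"]) (simp add: algebra_simps power_def)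
  qed
qed
definition Hr :: "rat \<Rightarrow> rat \<Rightarrow> rat" where
 "Hr e x = x*(21*e-729*x)/2 + 4374*e*x^3 - 19683*x^4"
definition Jr :: "rat \<Rightarrow> rat \<Rightarrow> rat" where
 "Jr e x = (8*e*x - 567*x^2 + 15066*e*x^3 - 203391*x^4)/4 + 354294*e*x^5 - 1062882*x^6"
definition gr :: "rat \<Rightarrow> rat \<Rightarrow> rat" where
 "gr e x = 108*x^2 - 18*e*x + 1"

lemma H_mn_Hr: fixes e m n :: int assumes "e = 1 \<or> e = -1"
  shows "H_mn e m n = Hr (of_int e) (of_int (m+24*n))"
proof -
  have e: "of_int e = (1::rat) \<or> of_int e = (-1::rat)" using assms by auto
  show ?thesis unfolding H_mn_def Let_def Hr_def of_int_diff of_int_mult of_int_add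
    using e by (simp only: of_int_numeral) (erule disjE; simp only:; (thin_tac "_ = 1" | thin_tac "_ = -1"); algebra)
qed

lemma J_mn_Jr: fixes e m n :: int assumes "e = 1 \<or> e = -1"
  shows "J_mn e m n = Jr (of_int e) (of_int (m+24*n))"
proof -
  have e: "of_int e = (1::rat) \<or> of_int e = (-1::rat)" using assms by auto
  show ?thesis unfolding J_mn_def Let_def Jr_def of_int_diff of_int_mult of_int_add
    using e by (simp only: of_int_numeral) (erule disjE; simp only:; (thin_tac "_ = 1" | thin_tac "_ = -1"); algebra)
qed

definition discp :: "rat \<Rightarrow> rat \<Rightarrow> rat \<Rightarrow> rat \<Rightarrow> rat \<Rightarrow> rat" where
 "discp x1 x2 x3 x4 x6 = (let b2 = x1^2 + 4*x2; b4 = 2*x4 + x1*x3; b6 = x3^2 + 4*x6;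
    b8 = x1^2*x6 + 4*x2*x6 - x1*x3*x4 + x2*x3^2 - x4^2 in
    - (b2 ^ 2) * b8 - 8 * b4 ^ 3 - 27 * b6 ^ 2 + 9 * b2 * b4 * b6)"

lemma disc_discp: "disc E = discp (a1 E) (a2 E) (a3 E) (a4 E) (a6 E)"
  by (simp add: disc_def discp_def b2_def b4_def b6_def b8_def Let_def)

lemma discp_scale: "u^12 * discp x1 x2 x3 x4 x6 = discp (u*x1) (u^2*x2) (u^3*x3) (u^4*x4) (u^6*x6)"
  unfolding discp_def Let_def by algebra

lemma discp_change: "discp (1 + 2*s) (- s + 3*r - s^2) (r + 2*t) (H - (t + r*s) + 3*r^2 - 2*s*t)
   (J + r*H + r^3 - t^2 - r*t) = discp 1 0 0 H J"
  unfolding discp_def Let_def by (simp only: power_one mult_1 mult_1_right mult_zero_left mult_zero_right add_0_right add_0_left power_zero_numeral) algebra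

lemma disc_E: fixes e x :: rat assumes "e = 1 \<or> e = -1"
  shows "discp 1 0 0 (Hr e x) (Jr e x) = -2*e*x*gr e x"
  unfolding discp_def Let_def Hr_def Jr_def gr_def
  using assms by (simp only: power_one mult_1 mult_1_right mult_zero_left mult_zero_right add_0_right add_0_left power_zero_numeral) (erule disjE; simp only:; (thin_tac "_ = 1" | thin_tac "_ = -1"); algebra)

definition c4p :: "rat \<Rightarrow> rat \<Rightarrow> rat \<Rightarrow> rat \<Rightarrow> rat" where
 "c4p x1 x2 x3 x4 = (x1^2 + 4*x2)^2 - 24*(2*x4 + x1*x3)"

lemma c4_c4p: "c4 E = c4p (a1 E) (a2 E) (a3 E) (a4 E)"
  by (simp add: c4_def c4p_def b2_def b4_def)

lemma c4p_scale: "u^4 * c4p x1 x2 x3 x4 = c4p (u*x1) (u^2*x2) (u^3*x3) (u^4*x4)"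
  unfolding c4p_def by algebra

lemma c4p_change: "c4p (1 + 2*s) (- s + 3*r - s^2) (r + 2*t) (H - (t + r*s) + 3*r^2 - 2*s*t) = c4p 1 0 0 H"
  unfolding c4p_def by (simp only: power_one mult_1 mult_1_right mult_zero_left mult_zero_right add_0_right add_0_left power_zero_numeral) algebra

lemma iso_transform:
  assumes "iso_Q \<lparr>a1 = 1, a2 = 0, a3 = 0, a4 = H, a6 = J\<rparr> M"
  shows "\<exists>u. u \<noteq> 0 \<and> discp 1 0 0 H J = u^12 * disc M \<and> c4p 1 0 0 H = u^4 * c4 M"
proof -
  obtain u r s t where u: "u \<noteq> 0" and
    e1: "u * a1 M = 1 + 2 * s" and
    e2: "u^2 * a2 M = - s + 3 * r - s^2" and
    e3: "u^3 * a3 M = r + 2 * t" and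
    e4: "u^4 * a4 M = H - (t + r * s) + 3 * r^2 - 2 * s * t" and
    e6: "u^6 * a6 M = J + r * H + r^3 - t^2 - r * t"
    using assms unfolding iso_Q_def by (auto simp: algebra_simps)
  have "u^12 * disc M = discp 1 0 0 H J"
    unfolding disc_discp discp_scale e1 e2 e3 e4 e6 discp_change ..
  moreover have "u^4 * c4 M = c4p 1 0 0 H"
    unfolding c4_c4p c4p_scale e1 e2 e3 e4 c4p_change ..
  ultimately show ?thesis using u by metis
qed

lemma velu_iso: fixes e x :: rat assumes "e = 1 \<or> e = -1"
  shows "iso_Q (velu3 \<lparr>a1 = - e * (18*x - e), a2 = 0, a3 = -2*e*x*gr e x, a4 = 0, a6 = 0\<rparr> (Aff 0 0))
     \<lparr>a1 = 1, a2 = 0, a3 = 0, a4 = Hr e x, a6 = Jr e x\<rparr>"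
  unfolding iso_Q_def
  apply (rule exI[where x=1], rule exI[where x="-3*x*(9*x-e)"], rule exI[where x="9*e*x"],
         rule exI[where x="-e*x*(270*x^2 - 45*e*x + 1)/2"])
  using assms apply (simp add: b2_def Hr_def Jr_def gr_def Let_def)
  apply (erule disjE; simp only:; (thin_tac "_ = 1" | thin_tac "_ = -1"); intro conjI; simp add: field_simps; algebra)
  done

lemma pmul_order3:
  assumes "b \<noteq> 0"
  shows "point_order \<lparr>a1 = a, a2 = 0, a3 = b, a4 = 0, a6 = 0\<rparr> (Aff 0 0) = 3"
proof -
  let ?C = "\<lparr>a1 = a, a2 = 0, a3 = b, a4 = 0, a6 = 0\<rparr>"
  have p1: "pmul ?C 1 (Aff 0 0) = Aff 0 0" by simp
  have p2: "pmul ?C 2 (Aff 0 0) = Aff 0 (-b)" using assms by (simp add: numeral_2_eq_2 Let_def)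
  have p3: "pmul ?C 3 (Aff 0 0) = Inf" using assms by (simp add: numeral_3_eq_3 numeral_2_eq_2 Let_def)
  have ex: "\<exists>k>0. pmul ?C k (Aff 0 0) = Inf" using p3 by (intro exI[of _ "3::nat"]) simp
  have "(LEAST k. k > 0 \<and> pmul ?C k (Aff 0 0) = Inf) = 3"
  proof (rule Least_equality)
    show "(3::nat) > 0 \<and> pmul ?C 3 (Aff 0 0) = Inf" using p3 by simp
  next
    fix k assume k: "k > 0 \<and> pmul ?C k (Aff 0 0) = Inf"
    show "3 \<le> k"
    proof (rule ccontr)
      assume "\<not> 3 \<le> k"
      with k have "k = 1 \<or> k = 2" by auto
      with k p1 p2 show False by auto
    qed
  qed
  thus ?thesis using ex unfolding point_order_def by simp
qed

lemma disc_C: "disc \<lparr>a1 = a, a2 = 0, a3 = b, a4 = 0, a6 = 0\<rparr> = b^3 * (a^3 - 27*b)"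
  by (simp add: disc_def b2_def b4_def b6_def b8_def) algebra

lemma C_special: fixes e x :: rat assumes "e = 1 \<or> e = -1"
  shows "(- e * (18*x - e))^3 - 27 * (-2*e*x*gr e x) = 1"
  unfolding gr_def
  by (rule disjE[OF assms]; simp only:; (thin_tac "_ = 1" | thin_tac "_ = -1"); simp add: field_simps; algebra)

lemma gr_pos: fixes e x :: rat assumes "e = 1 \<or> e = -1" shows "gr e x > 0"
proof -
  have "gr e x = 3*(6*x - e/2)^2 + 1/4" using assms unfolding gr_def by (auto simp: field_simps power2_eq_square)
  moreover have "0 \<le> 3*(6*x - e/2)^2" by simp
  ultimately show ?thesis by linarith
qed

lemma scale_bound:
  fixes u :: rat and D dM :: int
  assumes eq: "of_int D = u^12 * of_int dM" and D0: "D \<noteq> 0"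
    and np: "\<forall>p::int. prime p \<longrightarrow> \<not> p^6 dvd D" and u0: "u \<noteq> 0"
  shows "\<bar>D\<bar> \<le> \<bar>dM\<bar>" and "\<bar>dM\<bar> \<le> \<bar>D\<bar> \<Longrightarrow> u = 1 \<or> u = -1"
proof -
  obtain a b where q: "quotient_of u = (a, b)" by (cases "quotient_of u") auto
  have ub: "u = of_int a / of_int b" using quotient_of_div[OF q] .
  have b0: "b > 0" using quotient_of_denom_pos[OF q] .
  have cop: "coprime a b" using quotient_of_coprime[OF q] .
  have a0: "a \<noteq> 0" using u0 ub by auto
  have "(of_int (D * b^12) :: rat) = of_int (a^12 * dM)"
    using eq b0 unfolding ub by (simp add: field_simps power_divide)
  hence eqi: "D * b^12 = a^12 * dM" by (simp only: of_int_eq_iff)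
  have "a^12 dvd D * b^12" using eqi by simp
  moreover have "coprime (a^12) (b^12)" using cop by simp
  ultimately have adv: "a^12 dvd D" using coprime_dvd_mult_left_iff by blast
  have au: "is_unit a"
  proof (rule ccontr)
    assume "\<not> is_unit a"
    then obtain p where p: "prime p" "p dvd a" using prime_divisor_exists[OF a0] by blast
    have "p^6 dvd a^6" using p(2) by (simp add: dvd_power_same)
    also have "a^6 dvd a^12" by (simp add: le_imp_power_dvd)
    also note adv
    finally show False using np p(1) by blast
  qed
  have a1: "a = 1 \<or> a = -1" using au by (auto simp: zdvd1_eq abs_if split: if_splits)
  hence a12: "a^12 = 1" by auto
  hence dM: "dM = D * b^12" using eqi by simp
  have b12: "b^12 \<ge> 1" using b0 by (simp add: one_le_power)
  show "\<bar>D\<bar> \<le> \<bar>dM\<bar>" unfolding dM abs_mult using b12 D0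
    by (simp add: mult_le_cancel_left1)
  assume "\<bar>dM\<bar> \<le> \<bar>D\<bar>"
  hence "\<bar>D\<bar> * b^12 \<le> \<bar>D\<bar> * 1" unfolding dM abs_mult using b0 by simp
  hence "b^12 \<le> 1" using D0 by (simp add: mult_le_cancel_left)
  moreover have "b \<le> b^12" using b0 by (intro self_le_power) auto
  ultimately have "b = 1" using b0 by linarith
  with a1 show "u = 1 \<or> u = -1" unfolding ub by auto
qed

lemma disc_Ints: "integral_model M \<Longrightarrow> disc M \<in> \<int>"
  unfolding integral_model_def disc_def b2_def b4_def b6_def b8_def
  by (intro Ints_add Ints_diff Ints_mult Ints_power Ints_minus Ints_numeral; simp)

lemma minimal_facts:
  fixes H J :: rat and D C :: int
  assumes HZ: "H \<in> \<int>" "J \<in> \<int>" and dD: "discp 1 0 0 H J = of_int D" and D0: "D \<noteq> 0"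
    and np: "\<forall>p::int. prime p \<longrightarrow> \<not> p^6 dvd D" and cc: "c4p 1 0 0 H = of_int C"
  shows "min_disc \<lparr>a1 = 1, a2 = 0, a3 = 0, a4 = H, a6 = J\<rparr> = D \<and>
         min_c4 \<lparr>a1 = 1, a2 = 0, a3 = 0, a4 = H, a6 = J\<rparr> = C"
proof -
  define E where "E = \<lparr>a1 = 1, a2 = 0, a3 = 0, a4 = H, a6 = J\<rparr>"
  have key: "\<bar>D\<bar> \<le> \<bar>dM\<bar> \<and> (\<bar>dM\<bar> \<le> \<bar>D\<bar> \<longrightarrow> disc M = of_int D \<and> c4 M = of_int C)"
    if M: "integral_model M" "iso_Q E M" "disc M = of_int dM" for M dM
  proof -
    obtain u where u: "u \<noteq> 0" "discp 1 0 0 H J = u^12 * disc M" "c4p 1 0 0 H = u^4 * c4 M"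
      using iso_transform[of H J M] M(2) unfolding E_def by blast
    have eq: "of_int D = u^12 * of_int dM" using u(2) dD M(3) by simp
    note sb = scale_bound[OF eq D0 np u(1)]
    show ?thesis
    proof (intro conjI impI)
      show "\<bar>D\<bar> \<le> \<bar>dM\<bar>" by (rule sb(1))
      assume "\<bar>dM\<bar> \<le> \<bar>D\<bar>"
      from sb(2)[OF this] have "u^12 = 1" "u^4 = 1" by auto
      thus "disc M = of_int D" "c4 M = of_int C" using u dD cc by auto
    qed
  qed
  have EE: "minimal_model E E"
    unfolding minimal_model_def
  proof (intro conjI allI impI)
    show "integral_model E" unfolding E_def integral_model_def using HZ by simp
    show "iso_Q E E" unfolding iso_Q_def by (rule exI[of _ 1], rule exI[of _ 0], rule exI[of _ 0], rule exI[of _ 0]) simp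
    fix M' assume M': "integral_model M' \<and> iso_Q E M'"
    obtain dM where dM: "disc M' = of_int dM" using disc_Ints[of M'] M' by (auto elim: Ints_cases)
    have "disc E = of_int D" unfolding E_def disc_discp using dD by simp
    thus "\<bar>disc E\<bar> \<le> \<bar>disc M'\<bar>" using key[of M' dM] M' dM
      by (simp del: of_int_abs add: of_int_abs[symmetric])
  qed
  hence "minimal_model E (min_model E)" unfolding min_model_def by (rule someI)
  then have M0: "integral_model (min_model E)" "iso_Q E (min_model E)"
     "\<bar>disc (min_model E)\<bar> \<le> \<bar>disc E\<bar>"
    unfolding minimal_model_def using EE unfolding minimal_model_def by blast+
  obtain dM where dM: "disc (min_model E) = of_int dM" using disc_Ints[OF M0(1)] by (auto elim: Ints_cases)
  have "disc E = of_int D" unfolding E_def disc_discp using dD by simp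
  hence "\<bar>dM\<bar> \<le> \<bar>D\<bar>" using M0(3) dM by (simp del: of_int_abs add: of_int_abs[symmetric])
  hence "disc (min_model E) = of_int D \<and> c4 (min_model E) = of_int C" using key[OF M0(1,2) dM] by blast
  thus ?thesis unfolding E_def[symmetric] min_disc_def min_c4_def by simp
qed

definition gi :: "int \<Rightarrow> int \<Rightarrow> int" where "gi e L = 108*L^2 - 18*e*L + 1"

lemma f_m_gi: "f_m e m n = gi e (m + 24*n)"
  unfolding f_m_def gi_def by algebra

lemma gr_gi: "gr (of_int e) (of_int L) = of_int (gi e L)"
  unfolding gr_def gi_def by simp

lemma Hr_int: fixes e L :: int assumes "e = 1 \<or> e = -1"
  shows "Hr (of_int e) (of_int L) = of_int (Hi e L)"
proof -
  have "even (L*(21*e - 729*L))" using assms by (intro even_H) auto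
  then obtain q where q: "L*(21*e - 729*L) = 2*q" by blast
  have Hi: "Hi e L = q + 4374*e*L^3 - 19683*L^4" unfolding Hi_def q by simp
  have qr: "(of_int q::rat) = of_int (L*(21*e - 729*L))/2" unfolding q by simp
  show ?thesis unfolding Hi Hr_def by (simp add: qr)
qed

lemma Jr_int: fixes e L :: int assumes "e = 1 \<or> e = -1"
  shows "Jr (of_int e) (of_int L) = of_int (Ji e L)"
proof -
  obtain q where q: "8*e*L - 567*L^2 + 15066*e*L^3 - 203391*L^4 = 4*q" using four_J[OF assms] by blast
  have Ji: "Ji e L = q + 354294*e*L^5 - 1062882*L^6" unfolding Ji_def q by simp
  have qr: "(of_int q::rat) = of_int (8*e*L - 567*L^2 + 15066*e*L^3 - 203391*L^4)/4" unfolding q by simp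
  show ?thesis unfolding Ji Jr_def by (simp add: qr)
qed

lemma c4_E: fixes e x :: rat assumes "e = 1 \<or> e = -1"
  shows "c4p 1 0 0 (Hr e x) = 9*(18*x-e)^4 + 8*e*(18*x-e)"
  unfolding c4p_def Hr_def
  by (rule disjE[OF assms]; simp only:; (thin_tac "_ = 1" | thin_tac "_ = -1"); simp add: field_simps; algebra)

lemma A3_int: fixes e L :: int assumes "e = 1 \<or> e = -1"
  shows "(18*L - e)^3 + e = 54 * L * gi e L"
  unfolding gi_def
  by (rule disjE[OF assms]; simp only:; (thin_tac "_ = 1" | thin_tac "_ = -1"); algebra)

definition ee :: "int \<Rightarrow> int" where "ee m = 2^(idx m - 1)"

lemma m_facts:
  assumes "m \<in> {1, 2, 5, 7, 8, 10, 11, 13, 14, 16, 17, 19, 22, 23}"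
  shows "ee m dvd m" "ee m dvd 24" "\<not> 3 dvd m" "m > 0"
    "idx m = 1 \<or> idx m = 2 \<or> idx m = 4"
    "idx m \<noteq> 4 \<Longrightarrow> odd (m div ee m) \<and> even (24 div ee m)"
    "idx m = 4 \<Longrightarrow> ee m = 8"
  using assms by (auto simp: idx_def ee_def)

lemma delta_eq:
  assumes "ee m dvd m" "ee m dvd 24"
  shows "delta_m e m n = (m div ee m + (24 div ee m) * n) * gi e (m + 24*n)"
    and "m + 24*n = ee m * (m div ee m + (24 div ee m) * n)"
proof -
  show L: "m + 24*n = ee m * (m div ee m + (24 div ee m) * n)"
    using assms by (simp add: algebra_simps)
  have "ee m > 0" unfolding ee_def by simp
  thus "delta_m e m n = (m div ee m + (24 div ee m) * n) * gi e (m + 24*n)"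
  proof -
    define L' where "L' = m div ee m + (24 div ee m) * n"
    have "delta_m e m n = (ee m * L' * gi e (m + 24*n)) div ee m"
      unfolding delta_m_def f_m_gi ee_def[symmetric] L'_def using L by simp
    also have "\<dots> = L' * gi e (m + 24*n)" using \<open>ee m > 0\<close> by (simp add: mult.assoc)
    finally show ?thesis unfolding L'_def .
  qed
qed

lemma mult_bound:
  fixes v d :: int and i :: nat
  assumes v: "prime v" and d0: "d \<noteq> 0" and sq: "squarefree d" and vd: "v dvd 2^i * d"
    and i: "i = 1 \<or> i = 2 \<or> i = 4" and odd: "i \<noteq> 4 \<Longrightarrow> odd d"
  shows "\<not> 3 dvd multiplicity v (2^i * d)"
proof -
  have pe: "prime_elem v" using v prime_def by blast
  have md: "multiplicity v (2^i * d) = multiplicity v ((2::int)^i) + multiplicity v d"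
    using pe d0 by (intro prime_elem_multiplicity_mult_distrib) auto
  have "\<forall>p. prime p \<longrightarrow> multiplicity p d \<le> 1" using sq squarefree_factorial_semiring''[OF d0] by simp
  hence mle: "multiplicity v d \<le> 1" using v by blast
  show ?thesis
  proof (cases "v = 2")
    case True
    have m2: "multiplicity v ((2::int)^i) = i" unfolding True by (intro multiplicity_prime_power) simp
    show ?thesis
    proof (cases "i = 4")
      case False
      hence "\<not> v dvd d" using odd True by auto
      hence "multiplicity v d = 0" by (rule not_dvd_imp_multiplicity_0)
      thus ?thesis unfolding md m2 using False i by auto
    next
      case i4: True
      have "multiplicity v d = 0 \<or> multiplicity v d = 1" using mle by auto
      moreover have "multiplicity v (2^i*d) = 4 + multiplicity v d" using md m2 i4 by simp
      ultimately show ?thesis by auto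
    qed
  next
    case False
    have "multiplicity v (2::int) = 0" using False v by (intro prime_multiplicity_other) auto
    hence m2: "multiplicity v ((2::int)^i) = 0" using pe by (simp add: prime_elem_multiplicity_power_distrib)
    have "\<not> v dvd (2::int)^i"
    proof
      assume "v dvd (2::int)^i"
      hence "v dvd 2" using v prime_dvd_power by blast
      hence "v \<le> 2" by (simp add: zdvd_imp_le)
      moreover have "v \<ge> 2" using v prime_ge_2_int by blast
      ultimately show False using False by simp
    qed
    hence "v dvd d" using vd v prime_dvd_mult_iff by blast
    hence "multiplicity v d \<ge> 1" using d0 v by (intro multiplicity_geI) auto
    hence "multiplicity v d = 1" using mle by simp
    thus ?thesis unfolding md m2 by simp
  qed
qed

lemma part1:
  fixes e m n :: int
  assumes e: "e \<in> {1, -1}"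
    and mm: "m \<in> {1, 2, 5, 7, 8, 10, 11, 13, 14, 16, 17, 19, 22, 23}"
    and n0: "n \<ge> 0" and sq: "squarefree (delta_m e m n)"
  shows "elliptic (E_mn e m n) \<and>
       (\<exists>C P. elliptic C \<and> on_curve C P \<and> point_order C P = 3 \<and> iso_Q (velu3 C P) (E_mn e m n)) \<and>
       semistable (E_mn e m n) \<and>
       good_reduction (E_mn e m n) 3 \<and>
       (\<forall>v::int. prime v \<and> bad_reduction (E_mn e m n) v \<longrightarrow>
          \<not> (3::nat) dvd multiplicity v (min_disc (E_mn e m n)))"
proof -
  have e': "e = 1 \<or> e = -1" using e by auto
  have er: "(of_int e::rat) = 1 \<or> of_int e = -1" using e by auto
  note mf = m_facts[OF mm]
  define L where "L = m + 24*n"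
  have L1: "L \<ge> 1" using mf(4) n0 unfolding L_def by simp
  define x where "x = (of_int L :: rat)"
  define g where "g = gi e L"
  have gpos: "g > 0" using gr_pos[OF er, of x] unfolding x_def g_def gr_gi by simp
  define H where "H = Hr (of_int e) x"
  define J where "J = Jr (of_int e) x"
  have Eeq: "E_mn e m n = \<lparr>a1 = 1, a2 = 0, a3 = 0, a4 = H, a6 = J\<rparr>"
    unfolding E_mn_def H_mn_Hr[OF e'] J_mn_Jr[OF e'] H_def J_def x_def L_def ..
  define D where "D = -2*e*L*g"
  have dD: "discp 1 0 0 H J = of_int D"
    unfolding H_def J_def disc_E[OF er] D_def x_def g_def gr_gi by simp
  have D0: "D \<noteq> 0" using e' L1 gpos unfolding D_def by auto
  have ell: "elliptic (E_mn e m n)"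
    unfolding elliptic_def Eeq disc_discp using dD D0 by simp
  define b where "b = -2*of_int e*x*gr (of_int e) x"
  define C where "C = \<lparr>a1 = - of_int e * (18*x - of_int e), a2 = 0, a3 = b, a4 = 0, a6 = 0\<rparr>"
  have b0: "b \<noteq> 0" unfolding b_def x_def gr_gi using e' L1 gpos g_def by auto
  have Cex: "\<exists>C P. elliptic C \<and> on_curve C P \<and> point_order C P = 3 \<and> iso_Q (velu3 C P) (E_mn e m n)"
  proof (intro exI conjI)
    show "elliptic C" unfolding elliptic_def C_def disc_C using C_special[OF er, of x] b0
      unfolding b_def by simp
    show "on_curve C (Aff 0 0)" unfolding C_def by simp
    show "point_order C (Aff 0 0) = 3" unfolding C_def by (rule pmul_order3[OF b0])
    show "iso_Q (velu3 C (Aff 0 0)) (E_mn e m n)" unfolding C_def b_def Eeq H_def J_def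
      by (rule velu_iso[OF er])
  qed
  define L' where "L' = m div ee m + (24 div ee m) * n"
  have dl: "delta_m e m n = L' * g" unfolding L'_def g_def L_def using delta_eq(1)[OF mf(1,2)] by simp
  have LL: "L = ee m * L'" unfolding L'_def L_def using delta_eq(2)[OF mf(1,2)] by simp
  define d where "d = delta_m e m n"
  have d0: "d \<noteq> 0" using sq unfolding d_def by auto
  have eei: "2 * ee m = 2^idx m" using mf(5) unfolding ee_def by auto
  have Dd: "D = -e * (2^idx m * d)" unfolding D_def d_def dl LL eei[symmetric] by (simp add: algebra_simps)
  have np: "\<forall>p::int. prime p \<longrightarrow> \<not> p^6 dvd D"
  proof (intro allI impI notI)
    fix p :: int assume p: "prime p" and pd: "p^6 dvd D"
    have "p^6 dvd 2^idx m * d" using pd e' unfolding Dd by auto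
    moreover have "(2::int)^idx m dvd 2^4" using mf(5) by auto
    ultimately have p16: "p^6 dvd 2^4 * d" by (meson dvd_trans mult_dvd_mono dvd_refl)
    have "p^2 dvd d"
    proof (cases "p = 2")
      case True
      hence "2^2 * 2^4 dvd 2^4 * (d::int)" using p16 by (simp add: power_add[symmetric])
      thus ?thesis using True by simp presburger
    next
      case False
      have "\<not> p dvd 2" using primes_dvd_imp_eq[OF p, of 2] False by auto
      hence "coprime p 2" using prime_imp_coprime[OF p] by blast
      hence "coprime (p^6) (2^4::int)" by (simp only: coprime_power_left_iff coprime_power_right_iff) blast
      hence "p^6 dvd d" using p16 coprime_dvd_mult_right_iff by blast
      thus ?thesis by (rule dvd_trans[rotated]) (simp add: le_imp_power_dvd)
    qed
    hence "is_unit p" using sq unfolding d_def by (rule squarefreeD[rotated])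
    thus False using p not_prime_unit by blast
  qed
  define Cc where "Cc = 9*(18*L-e)^4 + 8*e*(18*L-e)"
  have cc: "c4p 1 0 0 H = of_int Cc" unfolding H_def c4_E[OF er] Cc_def x_def by simp
  have HZ: "H \<in> \<int>" "J \<in> \<int>" unfolding H_def J_def x_def Hr_int[OF e'] Jr_int[OF e'] by simp_all
  have mins: "min_disc (E_mn e m n) = D" "min_c4 (E_mn e m n) = Cc"
    using minimal_facts[OF HZ dD D0 np cc] unfolding Eeq by auto
  have A3: "(18*L - e)^3 + e = 54 * L * g" unfolding g_def by (rule A3_int[OF e'])
  have Codd: "odd Cc" using e' unfolding Cc_def by auto
  have semi: "semistable (E_mn e m n)"
    unfolding semistable_def good_reduction_def multiplicative_reduction_def mins
  proof (intro allI impI)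
    fix p :: int assume p: "prime p"
    show "\<not> p dvd D \<or> p dvd D \<and> \<not> p dvd Cc"
    proof (rule ccontr)
      assume "\<not> ?thesis"
      hence pD: "p dvd D" and pC: "p dvd Cc" by auto
      have "p dvd 2 * (L * g)" using pD e' unfolding D_def by (auto simp: mult.assoc)
      hence "p dvd 2 \<or> p dvd L * g" using p prime_dvd_mult_iff by blast
      thus False
      proof
        assume "p dvd 2"
        hence "p = 2" using primes_dvd_imp_eq[OF p, of 2] by auto
        thus False using pC Codd by simp
      next
        assume "p dvd L * g"
        hence "p dvd (18*L - e)^3 + e" unfolding A3 by (simp add: mult.assoc)
        hence "p dvd 9*(18*L-e)*((18*L - e)^3 + e)" by simp
        moreover have "e*(18*L-e) = 9*(18*L-e)*((18*L - e)^3 + e) - Cc"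
          unfolding Cc_def using e' by (auto simp: algebra_simps power_def)
        ultimately have "p dvd e*(18*L-e)" using pC by (simp only:) (rule dvd_diff)
        hence "p dvd e*(e*(18*L-e))" by (rule dvd_mult)
        moreover have "e*(e*(18*L-e)) = 18*L - e" using e' by auto
        ultimately have "p dvd 18*L - e" by simp
        hence "p dvd (18*L-e) * (18*L-e)^2" by (rule dvd_mult2)
        hence "p dvd (18*L-e)^3" by (simp add: power3_eq_cube power2_eq_square mult.assoc)
        with \<open>p dvd (18*L - e)^3 + e\<close> have "p dvd e" by (metis dvd_add_right_iff)
        thus False using e' p by auto
      qed
    qed
  qed
  have good3: "good_reduction (E_mn e m n) 3"
    unfolding good_reduction_def mins
  proof
    assume "3 dvd D"
    hence "3 dvd 2 * (L * g)" using e' unfolding D_def by (auto simp: mult.assoc)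
    moreover have "prime (3::int)" by simp
    ultimately have "3 dvd L \<or> 3 dvd g" using prime_dvd_mult_iff[of "3::int"] by auto
    moreover have "\<not> 3 dvd L" using mf(3) unfolding L_def by presburger
    moreover have "g = 3*(36*L^2 - 6*e*L) + 1" unfolding g_def gi_def by simp
    hence "\<not> 3 dvd g" by presburger
    ultimately show False by blast
  qed
  have m4: "\<forall>v::int. prime v \<and> bad_reduction (E_mn e m n) v \<longrightarrow>
          \<not> (3::nat) dvd multiplicity v (min_disc (E_mn e m n))"
  proof (intro allI impI)
    fix v :: int assume v: "prime v \<and> bad_reduction (E_mn e m n) v"
    have vD: "v dvd 2^idx m * d" using v e' unfolding bad_reduction_def mins Dd by auto
    have "multiplicity v D = multiplicity v (2^idx m * d)"
      unfolding Dd using e' by (auto simp: multiplicity_times_unit_right)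
    moreover have "odd d" if "idx m \<noteq> 4"
    proof -
      have "odd L'" using mf(6)[OF that] unfolding L'_def by auto
      moreover have "odd g" unfolding g_def gi_def by simp
      ultimately show ?thesis unfolding d_def dl by simp
    qed
    hence "\<not> 3 dvd multiplicity v (2^idx m * d)"
      using mult_bound[of v d "idx m"] v d0 sq vD mf(5) unfolding d_def by auto
    ultimately show "\<not> (3::nat) dvd multiplicity v (min_disc (E_mn e m n))" unfolding mins by simp
  qed
  show ?thesis using ell Cex semi good3 m4 by blast
qed


lemma pell_step:
  fixes k X1 X2 Y1 Y2 :: int
  assumes k: "k \<ge> 1" and X1: "X1 > 0" and X2: "X2 > 0" and Y1: "Y1 > 0" and Y12: "Y1 < Y2"
    and eq1: "k*Y1^2 = 3*X1^2 + 1" and eq2: "k*Y2^2 = 3*X2^2 + 1"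
  shows "2*Y1 \<le> Y2"
proof -
  define u where "u = k*Y1*Y2 - 3*X1*X2"
  define v where "v = X2*Y1 - X1*Y2"
  have i0: "u*Y1 + 3*v*X1 = Y2*(k*Y1^2 - 3*X1^2)" unfolding u_def v_def by algebra
  have i: "u*Y1 + 3*v*X1 = Y2" using i0 eq1 by simp
  have ii0: "u*Y2 - 3*v*X2 = Y1*(k*Y2^2 - 3*X2^2)" unfolding u_def v_def by algebra
  have ii: "u*Y2 - 3*v*X2 = Y1" using ii0 eq2 by simp
  have iii0: "u^2 - 3*k*v^2 = (k*Y1^2 - 3*X1^2)*(k*Y2^2 - 3*X2^2)" unfolding u_def v_def by algebra
  have iii: "u^2 = 1 + 3*k*v^2" using iii0 eq1 eq2 by simp
  have v0: "v \<noteq> 0"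
  proof
    assume "v = 0"
    hence "u^2 = 1" using iii by simp
    hence "u = 1 \<or> u = -1" by (metis power2_eq_1_iff)
    thus False using i \<open>v = 0\<close> Y1 Y12 by auto
  qed
  have u0: "u \<noteq> 0" using iii k by (auto simp: power2_eq_square) (smt (verit) mult_nonneg_nonneg zero_le_square)
  have upos: "u > 0"
  proof (rule ccontr)
    assume "\<not> u > 0" hence un: "u < 0" using u0 by simp
    show False
    proof (cases "v > 0")
      case True
      have "u*Y2 < 0" using un Y1 Y12 by (simp add: mult_neg_pos)
      moreover have "3*v*X2 > 0" using True X2 by simp
      ultimately show False using ii Y1 by linarith
    next
      case False hence vn: "v < 0" using v0 by simp
      have "u*Y1 < 0" using un Y1 by (simp add: mult_neg_pos)
      moreover have "3*v*X1 < 0" using vn X1 by (simp add: mult_neg_pos)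
      ultimately show False using i Y1 Y12 by linarith
    qed
  qed
  have vpos: "v > 0"
  proof (rule ccontr)
    assume "\<not> v > 0" hence vn: "v < 0" using v0 by simp
    have "u*Y2 \<ge> Y2" using upos Y1 Y12 by simp
    moreover have "3*v*X2 < 0" using vn X2 by (simp add: mult_neg_pos)
    ultimately show False using ii Y12 by linarith
  qed
  have "1*Y1^2 \<le> k*Y1^2" using k by (intro mult_right_mono) auto
  hence "Y1^2 \<le> k*Y1^2" by simp
  also have "\<dots> \<le> (3*X1)^2"
  proof -
    have "1 \<le> X1" using X1 by simp
    hence "1*1 \<le> X1*X1" by (intro mult_mono) auto
    hence "X1*X1 \<ge> 1" by simp
    thus ?thesis using eq1 by (simp add: power2_eq_square)
  qed
  finally have sq: "Y1^2 \<le> (3*X1)^2" .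
  have "0 \<le> 3*X1" using X1 by simp
  with sq have "Y1 \<le> 3*X1" by (rule power2_le_imp_le)
  have "u*Y1 \<ge> Y1" using upos Y1 by simp
  moreover have "3*v*X1 \<ge> 3*X1" using vpos X1 by simp
  ultimately show ?thesis using i \<open>Y1 \<le> 3*X1\<close> by linarith
qed

lemma doubling_card:
  fixes S :: "int set"
  assumes "\<forall>a\<in>S. 0 < a \<and> a \<le> 2^j" "\<forall>a\<in>S. \<forall>b\<in>S. a < b \<longrightarrow> 2*a \<le> b"
  shows "card S \<le> j + 1"
  using assms
proof (induction j arbitrary: S)
  case 0
  hence "S \<subseteq> {1}" by force
  thus ?case using card_mono[of "{1::int}" S] by simp
next
  case (Suc j)
  have fin: "finite S" using Suc.prems(1) by (intro finite_subset[of S "{1..2^Suc j}"]) auto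
  define S1 where "S1 = S \<inter> {..2^j}"
  define S2 where "S2 = S \<inter> {2^j<..}"
  have "S = S1 \<union> S2" unfolding S1_def S2_def by auto
  hence "card S \<le> card S1 + card S2" using card_Un_le by metis
  moreover have "card S1 \<le> j + 1" using Suc.IH[of S1] Suc.prems unfolding S1_def by auto
  moreover have "card S2 \<le> 1"
  proof -
    have "a = b" if "a \<in> S2" "b \<in> S2" for a b
    proof (rule ccontr)
      assume "a \<noteq> b"
      then consider "a < b" | "b < a" by linarith
      thus False
      proof cases
        case 1 thus False using Suc.prems(1,2) that unfolding S2_def by force
      next
        case 2 thus False using Suc.prems(1,2) that unfolding S2_def by force
      qed
    qed
    moreover have "finite S2" using fin unfolding S2_def by simp
    ultimately show ?thesis using card_le_Suc0_iff_eq[of S2] by auto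
  qed
  ultimately show ?case by simp
qed

lemma cong_card:
  fixes S :: "int set" and N q :: int
  assumes S: "S \<subseteq> {1..N}" and q: "q > 0" and c: "\<forall>a\<in>S. \<forall>b\<in>S. q dvd a - b"
  shows "card S \<le> nat (N div q) + 1"
proof (cases "N \<ge> 0")
  case False thus ?thesis using S by auto
next
  case True
  have inj: "inj_on (\<lambda>n. (n - 1) div q) S"
  proof (rule inj_onI)
    fix a b assume ab: "a \<in> S" "b \<in> S" "(a - 1) div q = (b - 1) div q"
    have "q dvd (a - 1) - (b - 1)" using c ab by simp
    hence "(a - 1) mod q = (b - 1) mod q" by (simp add: mod_eq_dvd_iff)
    hence "a - 1 = b - 1" using ab(3) by (metis div_mult_mod_eq)
    thus "a = b" by simp
  qed
  have "(\<lambda>n. (n - 1) div q) ` S \<subseteq> {0..N div q}"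
  proof
    fix y assume "y \<in> (\<lambda>n. (n - 1) div q) ` S"
    then obtain n where n: "n \<in> S" "y = (n - 1) div q" by auto
    have "n \<ge> 1" using n S by auto
    hence "0 \<le> (n - 1) div q" using q by (simp add: div_int_pos_iff)
    moreover have "(n - 1) div q \<le> N div q" using n S q by (intro zdiv_mono1) auto
    ultimately show "y \<in> {0..N div q}" using n by simp
  qed
  hence "card ((\<lambda>n. (n - 1) div q) ` S) \<le> card {0..N div q}" by (intro card_mono) auto
  also have "card {0..N div q} = nat (N div q) + 1" using True q
    by (simp add: pos_imp_zdiv_nonneg_iff nat_add_distrib)
  finally show ?thesis using card_image[OF inj] by simp
qed


lemma odd_sum_aux: "(\<Sum>j\<in>{2..Suc M}. 1/(2*real j+1)^2) \<le> 1/6 - 1/(2*(2*real (Suc M)+1))"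
proof (induction M)
  case 0 thus ?case by simp
next
  case (Suc M)
  have "{2..Suc (Suc M)} = insert (Suc (Suc M)) {2..Suc M}" by auto
  hence "(\<Sum>j\<in>{2..Suc (Suc M)}. 1/(2*real j+1)^2) = 1/(2*real (Suc (Suc M))+1)^2 + (\<Sum>j\<in>{2..Suc M}. 1/(2*real j+1)^2)"
    by simp
  also have "\<dots> \<le> 1/(2*real (Suc (Suc M))+1)^2 + (1/6 - 1/(2*(2*real (Suc M)+1)))" using Suc.IH by simp
  also have "\<dots> \<le> 1/6 - 1/(2*(2*real (Suc (Suc M))+1))"
  proof -
    define t where "t = real M"
    have t0: "t \<ge> 0" unfolding t_def by simp
    have h: "(2*t+3)*(2*t+5) \<le> (2*(t+2)+1)^2" using t0 by (simp add: power2_eq_square algebra_simps)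
    have pos: "0 < (2*t+3)*(2*t+5)" using t0 by simp
    have "1/(2*(t+2)+1)^2 \<le> 1/((2*t+3)*(2*t+5))"
    proof (rule divide_left_mono[OF h])
      show "0 < (2*(t+2)+1)^2 * ((2*t+3)*(2*t+5))" using t0 pos by (intro mult_pos_pos) auto
    qed simp
    also have "\<dots> = 1/(2*(2*(t+1)+1)) - 1/(2*(2*(t+2)+1))"
    proof -
      define a where "a = 2*t+3"
      have a0: "a > 0" unfolding a_def using t0 by simp
      have an: "a \<noteq> 0" "a + 2 \<noteq> 0" using a0 by auto
      have "1/(a*(a+2)) = 1/(2*a) - 1/(2*(a+2))" using an a0 by (simp add: field_split_simps)
      moreover have "2*t+5 = a+2" "2*(2*(t+1)+1) = 2*a" "2*(2*(t+2)+1) = 2*(a+2)" unfolding a_def by simp_all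
      ultimately show ?thesis unfolding a_def by (simp add: algebra_simps)
    qed
    finally have "1/(2*(t+2)+1)^2 \<le> 1/(2*(2*(t+1)+1)) - 1/(2*(2*(t+2)+1))" .
    thus ?thesis unfolding t_def by (simp add: algebra_simps)
  qed
  finally show ?case .
qed

lemma odd_sum_bound:
  fixes P :: "int set"
  assumes fin: "finite P" and P: "\<forall>p\<in>P. odd p \<and> p \<ge> 5"
  shows "(\<Sum>p\<in>P. 1/(real_of_int p)^2) \<le> 1/6"
proof -
  define M where "M = nat (Max (insert 5 P))"
  have sub: "P \<subseteq> (\<lambda>j. 2*int j + 1) ` {2..Suc M}"
  proof
    fix p assume p: "p \<in> P"
    have "odd p" "p \<ge> 5" using P p by blast+
    then obtain j where j: "p = 2*j+1" by (blast elim: oddE)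
    have j2: "j \<ge> 2" using j \<open>p \<ge> 5\<close> by linarith
    have "p \<le> Max (insert 5 P)" using fin p by (intro Max_ge) simp_all
    moreover have "5 \<le> Max (insert 5 P)" using fin by (intro Max_ge) simp_all
    ultimately have "p \<le> int M" unfolding M_def by linarith
    hence "nat j \<le> Suc M" using j j2 by linarith
    hence "nat j \<in> {2..Suc M}" using j2 by simp
    moreover have "p = 2 * int (nat j) + 1" using j j2 by simp
    ultimately show "p \<in> (\<lambda>j. 2*int j + 1) ` {2..Suc M}" by (rule rev_image_eqI)
  qed
  have "(\<Sum>p\<in>P. 1/(real_of_int p)^2) \<le> (\<Sum>p\<in>(\<lambda>j. 2*int j + 1) ` {2..Suc M}. 1/(real_of_int p)^2)"
    by (intro sum_mono2 sub) simp_all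
  also have "\<dots> = (\<Sum>j\<in>{2..Suc M}. 1/(2*real j+1)^2)"
  proof (subst sum.reindex)
    show "inj_on (\<lambda>j. 2*int j + 1) {2..Suc M}" by (simp add: inj_on_def)
  qed simp
  also have "\<dots> \<le> 1/6" 
  proof -
    have "1/6 - 1/(2*(2*real (Suc M)+1)) \<le> (1/6::real)" by simp
    thus ?thesis using odd_sum_aux[of M] by linarith
  qed
  finally show ?thesis .
qed


lemma gi_facts:
  fixes e L :: int assumes e: "e = 1 \<or> e = -1" and L: "L \<ge> 1"
  shows "gi e L > 0" "odd (gi e L)" "\<not> 3 dvd gi e L" "gi e L = L*(108*L - 18*e) + 1"
proof -
  show g: "gi e L = L*(108*L - 18*e) + 1" unfolding gi_def by (simp add: algebra_simps power2_eq_square)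
  have "108*L - 18*e > 0" using e L by auto
  hence "L*(108*L - 18*e) > 0" using L by simp
  thus "gi e L > 0" using g by simp
  have "gi e L = 2*(54*L^2 - 9*e*L) + 1" unfolding gi_def by simp
  thus "odd (gi e L)" by presburger
  have "gi e L = 3*(36*L^2 - 6*e*L) + 1" unfolding gi_def by simp
  thus "\<not> 3 dvd gi e L" by presburger
qed

lemma prime_ge5:
  fixes p :: int assumes "prime p" "p \<noteq> 2" "p \<noteq> 3" shows "p \<ge> 5"
proof -
  have "p \<ge> 2" using assms(1) prime_ge_2_int by blast
  moreover have "p \<noteq> 4"
  proof
    assume "p = 4" hence "prime (4::int)" using assms(1) by simp
    moreover have "(2::int) dvd 4" by simp
    ultimately show False using primes_dvd_imp_eq[of 2 4] by (simp add: prime_dvd_mult_iff) 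
  qed
  ultimately show ?thesis using assms by linarith
qed

lemma sqf_crit:
  fixes e m n :: int
  assumes e: "e = 1 \<or> e = -1"
    and mm: "m \<in> {1, 2, 5, 7, 8, 10, 11, 13, 14, 16, 17, 19, 22, 23}"
    and n0: "n \<ge> 0"
    and h4: "\<not> 4 dvd (m div ee m + (24 div ee m)*n)"
    and hp: "\<forall>p. prime p \<and> p \<ge> 5 \<longrightarrow> \<not> p^2 dvd (m + 24*n) \<and> \<not> p^2 dvd gi e (m + 24*n)"
  shows "squarefree (delta_m e m n)"
proof -
  note mf = m_facts[OF mm]
  define L where "L = m + 24*n"
  define L' where "L' = m div ee m + (24 div ee m)*n"
  define g where "g = gi e L"
  have L1: "L \<ge> 1" using mf(4) n0 unfolding L_def by simp
  have LL: "L = ee m * L'" unfolding L'_def L_def using delta_eq(2)[OF mf(1,2)] by simp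
  have dl: "delta_m e m n = L' * g" unfolding L'_def g_def L_def using delta_eq(1)[OF mf(1,2)] by simp
  have ee0: "ee m > 0" unfolding ee_def by simp
  have "0 < ee m * L'" using L1 LL by simp
  hence L'0: "L' > 0" using zero_less_mult_pos ee0 by blast
  note gf = gi_facts[OF e L1]
  have g0: "g > 0" using gf(1) unfolding g_def .
  have L3: "\<not> 3 dvd L" using mf(3) unfolding L_def by presburger
  have d0: "L' * g \<noteq> 0" using L'0 g0 by simp
  have L'L: "L' dvd L" unfolding LL by simp
  show ?thesis unfolding dl squarefree_factorial_semiring[OF d0]
  proof (intro allI impI notI)
    fix p :: int assume p: "prime p" and pd: "p^2 dvd L' * g"
    consider "p = 2" | "p = 3" | "p \<ge> 5" using prime_ge5[OF p] by blast
    thus False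
    proof cases
      case 1
      have "coprime 2 g" using gf(2) unfolding g_def by simp
      hence "coprime (2^2) g" by (simp only: coprime_power_left_iff) simp
      hence "2^2 dvd L'" using pd 1 coprime_dvd_mult_left_iff by blast
      thus False using h4 unfolding L'_def by simp
    next
      case 2
      have "3 dvd L' * g" using pd 2 by (metis dvd_mult_left power2_eq_square dvd_trans)
      hence "3 dvd L' \<or> 3 dvd g" using prime_dvd_mult_iff[of "3::int"] by simp
      thus False using L3 L'L gf(3) unfolding g_def by (meson dvd_trans)
    next
      case 3
      show False
      proof (cases "p dvd g")
        case True
        have "\<not> p dvd L"
        proof
          assume "p dvd L"
          hence "p dvd L*(108*L - 18*e)" by simp
          hence "p dvd 1" using True gf(4) unfolding g_def by (metis dvd_add_right_iff)
          thus False using p not_prime_unit by blast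
        qed
        hence "\<not> p dvd L'" using L'L dvd_trans by blast
        hence "coprime p L'" using prime_imp_coprime[OF p] by blast
        hence "coprime (p^2) L'" by (simp only: coprime_power_left_iff) simp
        hence "p^2 dvd g" using pd coprime_dvd_mult_right_iff by blast
        thus False using hp p 3 unfolding g_def L_def by blast
      next
        case False
        hence "coprime p g" using prime_imp_coprime[OF p] by blast
        hence "coprime (p^2) g" by (simp only: coprime_power_left_iff) simp
        hence "p^2 dvd L'" using pd coprime_dvd_mult_left_iff by blast
        hence "p^2 dvd L" using L'L dvd_trans by blast
        thus False using hp p 3 unfolding L_def by blast
      qed
    qed
  qed
qed

lemma prime5_coprime:
  fixes p :: int assumes p: "prime p" "p \<ge> 5"
  shows "coprime (p^2) (2^a * 3^b)"
proof -
  have "\<not> p dvd 2" using primes_dvd_imp_eq[OF p(1), of 2] p(2) by auto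
  hence c2: "coprime p 2" using prime_imp_coprime[OF p(1)] by blast
  have "\<not> p dvd 3" using primes_dvd_imp_eq[OF p(1), of 3] p(2) by auto
  hence c3: "coprime p 3" using prime_imp_coprime[OF p(1)] by blast
  have "coprime p (2^a * 3^b)" using c2 c3 by simp
  thus ?thesis by (simp only: coprime_power_left_iff) simp
qed

lemma BL_card:
  fixes p m N :: int assumes p: "prime p" "p \<ge> 5"
  shows "card {n \<in> {1..N}. p^2 dvd m + 24*n} \<le> nat (N div p^2) + 1"
proof (rule cong_card)
  show "p^2 > 0" using p by simp
  show "\<forall>a\<in>{n \<in> {1..N}. p^2 dvd m + 24*n}. \<forall>b\<in>{n \<in> {1..N}. p^2 dvd m + 24*n}. p^2 dvd a - b"
  proof (intro ballI)
    fix a b assume "a \<in> {n \<in> {1..N}. p^2 dvd m + 24*n}" "b \<in> {n \<in> {1..N}. p^2 dvd m + 24*n}"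
    hence "p^2 dvd (m + 24*a) - (m + 24*b)" by (blast intro: dvd_diff)
    moreover have "(m + 24*a) - (m + 24*b) = (2^3*3^1) * (a - b)" by simp
    ultimately have "p^2 dvd (2^3*3^1) * (a - b)" by simp
    thus "p^2 dvd a - b" using prime5_coprime[OF p, of 3 1] coprime_dvd_mult_right_iff by blast
  qed
qed auto

lemma root_cases:
  fixes p X Y :: int assumes p: "prime p" "p \<ge> 5"
    and hx: "p^2 dvd 3*X^2 + 1" and hy: "p^2 dvd 3*Y^2 + 1"
  shows "p^2 dvd X - Y \<or> p^2 dvd X + Y"
proof -
  have "p^2 dvd (3*X^2 + 1) - (3*Y^2 + 1)" using hx hy by (rule dvd_diff)
  moreover have "(3*X^2 + 1) - (3*Y^2 + 1) = (2^0*3^1) * ((X - Y)*(X + Y))" by (simp add: algebra_simps power2_eq_square)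
  ultimately have "p^2 dvd (2^0*3^1) * ((X - Y)*(X + Y))" by simp
  hence h: "p^2 dvd (X - Y)*(X + Y)" using prime5_coprime[OF p, of 0 1] coprime_dvd_mult_right_iff by blast
  have "\<not> (p dvd X - Y \<and> p dvd X + Y)"
  proof
    assume "p dvd X - Y \<and> p dvd X + Y"
    hence "p dvd (X - Y) + (X + Y)" by (blast intro: dvd_add)
    moreover have "(X - Y) + (X + Y) = (2^1*3^0) * X" by simp
    ultimately have "p dvd (2^1*3^0) * X" by simp
    moreover have "coprime p (2^1*3^0)" using prime5_coprime[OF p, of 1 0] by simp
    ultimately have "p dvd X" using coprime_dvd_mult_right_iff by blast
    hence "p dvd 3*X^2" by (simp add: power2_eq_square)
    moreover have "p dvd 3*X^2 + 1" using hx by (rule dvd_trans[rotated]) simp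
    ultimately have "p dvd 1" by (metis dvd_add_right_iff)
    thus False using p not_prime_unit by blast
  qed
  thus ?thesis
  proof (cases "p dvd X - Y")
    case True
    hence "\<not> p dvd X + Y" using \<open>\<not> (p dvd X - Y \<and> p dvd X + Y)\<close> by blast
    hence "coprime (p^2) (X + Y)" using prime_imp_coprime[OF p(1)] by (simp only: coprime_power_left_iff) simp
    thus ?thesis using h coprime_dvd_mult_left_iff by blast
  next
    case False
    hence "coprime (p^2) (X - Y)" using prime_imp_coprime[OF p(1)] by (simp only: coprime_power_left_iff) simp
    thus ?thesis using h coprime_dvd_mult_right_iff by blast
  qed
qed

lemma gi_X: fixes e L :: int assumes e: "e = 1 \<or> e = -1"
  shows "4 * gi e L = 3*(12*L - e)^2 + 1"
  unfolding gi_def using e by (auto simp: algebra_simps power2_eq_square)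

lemma Bg_card:
  fixes e p m N :: int assumes e: "e = 1 \<or> e = -1" and p: "prime p" "p \<ge> 5"
  shows "card {n \<in> {1..N}. p^2 dvd gi e (m + 24*n)} \<le> 2 * (nat (N div p^2) + 1)"
proof -
  define S where "S = {n \<in> {1..N}. p^2 dvd gi e (m + 24*n)}"
  define X where "X = (\<lambda>n. 12*(m + 24*n) - e)"
  have key: "p^2 dvd 3*(X n)^2 + 1" if "n \<in> S" for n
  proof -
    have "p^2 dvd gi e (m + 24*n)" using that unfolding S_def by auto
    hence "p^2 dvd 4 * gi e (m + 24*n)" by simp
    thus ?thesis unfolding gi_X[OF e] X_def .
  qed
  have diff: "p^2 dvd a - b" if "p^2 dvd X a - X b" for a b
  proof -
    have "X a - X b = (2^5*3^2) * (a - b)" unfolding X_def by (simp add: algebra_simps)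
    thus ?thesis using that prime5_coprime[OF p, of 5 2] coprime_dvd_mult_right_iff by metis
  qed
  show ?thesis
  proof (cases "S = {}")
    case True thus ?thesis unfolding S_def[symmetric] by simp
  next
    case False
    then obtain a0 where a0: "a0 \<in> S" by blast
    define S1 where "S1 = {n \<in> S. p^2 dvd X n - X a0}"
    define S2 where "S2 = {n \<in> S. p^2 dvd X n + X a0}"
    have "S \<subseteq> S1 \<union> S2" unfolding S1_def S2_def using root_cases[OF p key key] a0 by blast
    moreover have "finite (S1 \<union> S2)" by (rule finite_subset[of _ "{1..N}"]) (auto simp: S1_def S2_def S_def)
    ultimately have "card S \<le> card (S1 \<union> S2)" by (intro card_mono)
    also have "\<dots> \<le> card S1 + card S2" by (rule card_Un_le)
    also have "card S1 \<le> nat (N div p^2) + 1"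
    proof (rule cong_card)
      show "S1 \<subseteq> {1..N}" unfolding S1_def S_def by auto
      show "p^2 > 0" using p by simp
      show "\<forall>a\<in>S1. \<forall>b\<in>S1. p^2 dvd a - b"
      proof (intro ballI)
        fix a b assume "a \<in> S1" "b \<in> S1"
        hence "p^2 dvd (X a - X a0) - (X b - X a0)" unfolding S1_def by (blast intro: dvd_diff)
        thus "p^2 dvd a - b" using diff by simp
      qed
    qed
    also have "card S2 \<le> nat (N div p^2) + 1"
    proof (rule cong_card)
      show "S2 \<subseteq> {1..N}" unfolding S2_def S_def by auto
      show "p^2 > 0" using p by simp
      show "\<forall>a\<in>S2. \<forall>b\<in>S2. p^2 dvd a - b"
      proof (intro ballI)
        fix a b assume "a \<in> S2" "b \<in> S2"
        hence "p^2 dvd (X a + X a0) - (X b + X a0)" unfolding S2_def by (blast intro: dvd_diff)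
        thus "p^2 dvd a - b" using diff by simp
      qed
    qed
    finally show ?thesis unfolding S_def by simp
  qed
qed

lemma gi_mono:
  fixes e a b :: int assumes e: "e = 1 \<or> e = -1" and a: "a \<ge> 1" and ab: "a < b"
  shows "gi e a < gi e b"
proof -
  have "gi e b - gi e a = (b - a) * (108*(a + b) - 18*e)" unfolding gi_def by (simp add: algebra_simps power2_eq_square)
  moreover have "b - a > 0" using ab by simp
  moreover have "108*(a + b) - 18*e > 0" using e a ab by auto
  ultimately have "gi e b - gi e a > 0" by simp
  thus ?thesis by simp
qed

lemma gi_le: fixes e L :: int assumes e: "e = 1 \<or> e = -1" and L: "L \<ge> 1"
  shows "gi e L \<le> (12*L)^2"
proof -
  have "(12*L)^2 - gi e L = L*(36*L + 18*e) - 1" unfolding gi_def by (simp add: algebra_simps power2_eq_square)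
  moreover have "L*(36*L + 18*e) \<ge> 1*18" using e L by (intro mult_mono) auto
  ultimately show ?thesis by simp
qed

lemma Sk_card:
  fixes e m k N :: int and j :: nat
  assumes e: "e = 1 \<or> e = -1" and m: "m \<ge> 1" "m \<le> 23" and k: "k \<ge> 1" and N: "N = 2^j"
  shows "card {n \<in> {1..N}. \<exists>y. gi e (m + 24*n) = k*y^2} \<le> j + 11"
proof -
  define S where "S = {n \<in> {1..N}. \<exists>y. gi e (m + 24*n) = k*y^2}"
  define G where "G = (\<lambda>n. gi e (m + 24*n))"
  define yf where "yf = (\<lambda>n. SOME y. y > 0 \<and> G n = k*y^2)"
  have yf: "yf n > 0 \<and> G n = k*(yf n)^2" if nS: "n \<in> S" for n
  proof -
    obtain y where y: "G n = k*y^2" using nS unfolding S_def by (auto simp: G_def)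
    have "G n > 0" unfolding G_def using gi_facts(1)[OF e] nS m unfolding S_def by auto
    hence "y \<noteq> 0" using y by auto
    hence "\<bar>y\<bar> > 0 \<and> G n = k*\<bar>y\<bar>^2" using y by simp
    hence "\<exists>y. y > 0 \<and> G n = k*y^2" by blast
    thus ?thesis unfolding yf_def by (rule someI_ex)
  qed
  have dbl: "2 * yf a \<le> yf b" if ab: "a \<in> S" "b \<in> S" "a < b" for a b
  proof -
    have a1: "a \<ge> 1" using ab unfolding S_def by auto
    have La: "m + 24*a \<ge> 1" using a1 m by simp
    have Lab: "m + 24*a < m + 24*b" using ab by simp
    have Ga: "4 * G a = 3*(12*(m+24*a) - e)^2 + 1" unfolding G_def by (rule gi_X[OF e])
    have Gb: "4 * G b = 3*(12*(m+24*b) - e)^2 + 1" unfolding G_def by (rule gi_X[OF e])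
    have "G a < G b" unfolding G_def by (rule gi_mono[OF e La Lab])
    hence "k * (yf a)^2 < k * (yf b)^2" using yf ab by simp
    hence "(yf a)^2 < (yf b)^2" using k by simp
    hence lt: "yf a < yf b" using yf ab by (meson abs_less_iff power2_less_imp_less less_le_trans not_le order_less_le)
    have "2*(2*yf a) \<le> 2*yf b"
    proof (rule pell_step[OF k])
      show "12*(m+24*a) - e > 0" "12*(m+24*b) - e > 0" using e La Lab by auto
      show "0 < 2*yf a" "2*yf a < 2*yf b" using yf ab lt by auto
      show "k*(2*yf a)^2 = 3*(12*(m+24*a) - e)^2 + 1" using Ga yf ab by (simp add: power_mult_distrib)
      show "k*(2*yf b)^2 = 3*(12*(m+24*b) - e)^2 + 1" using Gb yf ab by (simp add: power_mult_distrib)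
    qed
    thus ?thesis by simp
  qed
  have inj: "inj_on yf S"
  proof (rule inj_onI)
    fix a b assume ab: "a \<in> S" "b \<in> S" "yf a = yf b"
    show "a = b"
    proof (rule ccontr)
      assume "a \<noteq> b"
      then consider "a < b" | "b < a" by linarith
      thus False
      proof cases
        case 1 thus False using dbl[OF ab(1,2) 1] yf[OF ab(1)] ab(3) by simp
      next
        case 2 thus False using dbl[OF ab(2,1) 2] yf[OF ab(2)] ab(3) by simp
      qed
    qed
  qed
  have bnd: "yf n \<le> 2^(j+10)" if "n \<in> S" for n
  proof -
    have n: "1 \<le> n" "n \<le> N" using that unfolding S_def by auto
    have L: "m + 24*n \<ge> 1" using n m by simp
    have "1*(yf n)^2 \<le> k*(yf n)^2" using k by (intro mult_right_mono) auto
    also have "\<dots> = G n" using yf[OF that] by simp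
    also have "\<dots> \<le> (12*(m + 24*n))^2" unfolding G_def by (rule gi_le[OF e L])
    finally have "(yf n)^2 \<le> (12*(m + 24*n))^2" by simp
    moreover have "0 \<le> 12*(m + 24*n)" using L by simp
    ultimately have "yf n \<le> 12*(m + 24*n)" by (rule power2_le_imp_le)
    also have "\<dots> \<le> 1024 * N" using n m by simp
    also have "\<dots> = 2^(j+10)" unfolding N by (simp add: power_add)
    finally show ?thesis .
  qed
  have "card (yf ` S) \<le> (j + 10) + 1"
  proof (rule doubling_card)
    show "\<forall>a\<in>yf ` S. 0 < a \<and> a \<le> 2 ^ (j + 10)" using yf bnd by auto
    show "\<forall>a\<in>yf ` S. \<forall>b\<in>yf ` S. a < b \<longrightarrow> 2 * a \<le> b"
    proof (intro ballI impI)
      fix a b assume "a \<in> yf ` S" "b \<in> yf ` S" "a < b"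
      then obtain x y where xy: "x \<in> S" "y \<in> S" "a = yf x" "b = yf y" "yf x < yf y" by auto
      have "x < y"
      proof (rule ccontr)
        assume "\<not> x < y"
        hence "y < x \<or> y = x" by linarith
        thus False using dbl[OF xy(2,1)] xy yf by fastforce
      qed
      thus "2 * a \<le> b" using dbl[OF xy(1,2)] xy by simp
    qed
  qed
  thus ?thesis using card_image[OF inj] unfolding S_def by simp
qed

lemma large_cover:
  fixes e m N n p :: int
  assumes e: "e = 1 \<or> e = -1" and m: "m \<ge> 1" "m \<le> 23" and n: "1 \<le> n" "n \<le> N"
    and p: "p > 0" and pd: "p^2 dvd gi e (m + 24*n)" and Np: "N < 16*p"
  shows "\<exists>k\<in>{1..81432576}. \<exists>y. gi e (m + 24*n) = k*y^2"
proof -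
  define G where "G = gi e (m + 24*n)"
  have L: "m + 24*n \<ge> 1" using m n by simp
  have G0: "G > 0" unfolding G_def using gi_facts(1)[OF e L] .
  obtain k where k: "G = p^2 * k" using pd unfolding G_def by blast
  have p2: "p^2 > 0" using p by simp
  have k0: "k > 0" using G0 k p2 by (metis zero_less_mult_pos)
  have "G \<le> (12*(m + 24*n))^2" unfolding G_def by (rule gi_le[OF e L])
  also have "\<dots> \<le> (12*(47*N))^2" using m n by (intro power_mono) auto
  also have "\<dots> = 318096 * N^2" by (simp add: power_mult_distrib)
  also have "\<dots> < 318096 * (16*p)^2"
  proof -
    have "N^2 < (16*p)^2" using Np n by (intro power_strict_mono) auto
    thus ?thesis by simp
  qed
  also have "\<dots> = p^2 * 81432576" by (simp add: power_mult_distrib)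
  finally have "p^2 * k < p^2 * 81432576" using k by simp
  hence "k < 81432576" using p2 by simp
  thus ?thesis using k0 k unfolding G_def by (intro bexI[of _ k]) (auto simp: mult.commute)
qed

lemma prime5_odd: fixes p :: int assumes "prime p" "p \<ge> 5" shows "odd p"
proof
  assume "even p"
  hence "2 dvd p" by simp
  hence "2 = p" using primes_dvd_imp_eq[of 2 p] assms by simp
  thus False using assms by simp
qed

lemma sum_div_bound:
  fixes P :: "int set" and N :: int
  assumes fin: "finite P" and P: "\<forall>p\<in>P. prime p \<and> p \<ge> 5" and N: "N \<ge> 0"
  shows "(\<Sum>p\<in>P. real (nat (N div p^2))) \<le> real_of_int N / 6"
proof -
  have "(\<Sum>p\<in>P. real (nat (N div p^2))) \<le> (\<Sum>p\<in>P. real_of_int N * (1/(real_of_int p)^2))"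
  proof (rule sum_mono)
    fix p assume p: "p \<in> P"
    have "p^2 > 0" using P p by auto
    hence "N div p^2 \<ge> 0" using N by (simp add: pos_imp_zdiv_nonneg_iff)
    hence "real (nat (N div p^2)) = real_of_int (N div p^2)" by simp
    also have "\<dots> \<le> real_of_int N / real_of_int (p^2)" by (rule real_of_int_div4)
    finally show "real (nat (N div p^2)) \<le> real_of_int N * (1/(real_of_int p)^2)" by simp
  qed
  also have "\<dots> = real_of_int N * (\<Sum>p\<in>P. 1/(real_of_int p)^2)" by (simp add: sum_distrib_left)
  also have "\<dots> \<le> real_of_int N * (1/6)"
    using odd_sum_bound[OF fin] P prime5_odd N by (intro mult_left_mono) auto
  finally show ?thesis by simp
qed

lemma card_PL:
  fixes B :: int assumes B: "B \<ge> 0"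
  shows "real (card {p::int. prime p \<and> 5 \<le> p \<and> p^2 \<le> B}) \<le> sqrt (real_of_int B) + 1"
proof -
  define f where "f = \<lfloor>sqrt (real_of_int B)\<rfloor>"
  have sub: "{p::int. prime p \<and> 5 \<le> p \<and> p^2 \<le> B} \<subseteq> {0..f}"
  proof
    fix p assume p: "p \<in> {p::int. prime p \<and> 5 \<le> p \<and> p^2 \<le> B}"
    have "real_of_int p = sqrt ((real_of_int p)^2)" using p by simp
    also have "\<dots> \<le> sqrt (real_of_int B)" using p by (intro real_sqrt_le_mono) (simp add: of_int_le_iff[symmetric])
    finally have "p \<le> f" unfolding f_def by (simp add: le_floor_iff)
    thus "p \<in> {0..f}" using p by simp
  qed
  have "card {p::int. prime p \<and> 5 \<le> p \<and> p^2 \<le> B} \<le> card {0..f}" using sub by (intro card_mono) auto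
  also have "card {0..f} = nat (f + 1)" by simp
  finally have "real (card {p::int. prime p \<and> 5 \<le> p \<and> p^2 \<le> B}) \<le> real (nat (f + 1))" by linarith
  also have "\<dots> = real_of_int (f + 1)" using B unfolding f_def by simp
  also have "\<dots> \<le> sqrt (real_of_int B) + 1" unfolding f_def by simp
  finally show ?thesis .
qed

lemma card_PM:
  fixes N :: int assumes N: "N \<ge> 0"
  shows "real (card {p::int. prime p \<and> 5 \<le> p \<and> 16*p \<le> N}) \<le> real_of_int N / 16"
proof -
  have sub: "{p::int. prime p \<and> 5 \<le> p \<and> 16*p \<le> N} \<subseteq> {1..N div 16}"
  proof
    fix p assume p: "p \<in> {p::int. prime p \<and> 5 \<le> p \<and> 16*p \<le> N}"
    hence "(16*p) div 16 \<le> N div 16" by (intro zdiv_mono1) simp_all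
    hence "p \<le> N div 16" by simp
    thus "p \<in> {1..N div 16}" using p by simp
  qed
  have "card {p::int. prime p \<and> 5 \<le> p \<and> 16*p \<le> N} \<le> card {1..N div 16}" using sub by (intro card_mono) auto
  also have "card {1..N div 16} = nat (N div 16)" by simp
  finally have "real (card {p::int. prime p \<and> 5 \<le> p \<and> 16*p \<le> N}) \<le> real (nat (N div 16))" by linarith
  also have "\<dots> = real_of_int (N div 16)" using N by simp
  also have "\<dots> \<le> real_of_int N / 16" using real_of_int_div4[of N 16] by simp
  finally show ?thesis .
qed

lemma le_sq: fixes x :: int assumes "x \<ge> 1" shows "x \<le> x^2"
proof -
  have "x*1 \<le> x*x" using assms by (intro mult_left_mono) auto
  thus ?thesis by (simp add: power2_eq_square)
qed

lemma count_good:
  fixes e m :: int and j :: nat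
  assumes e: "e = 1 \<or> e = -1"
    and mm: "m \<in> {1, 2, 5, 7, 8, 10, 11, 13, 14, 16, 17, 19, 22, 23}"
  shows "real_of_int (2^j) \<le> real (card {n \<in> {1..2^j}. squarefree (delta_m e m n)})
     + 7/8 * real_of_int (2^j) + sqrt (24 * real_of_int (2^j) + 23) + 2 + 81432576 * (real j + 11)"
proof -
  define N :: int where "N = 2^j"
  have N1: "N \<ge> 1" unfolding N_def by simp
  note mf = m_facts[OF mm]
  have m23: "m \<le> 23" using mm by auto
  have m1: "m \<ge> 1" using mf(4) by simp
  define I where "I = {1..N}"
  define Good where "Good = {n \<in> I. squarefree (delta_m e m n)}"
  define L' where "L' = (\<lambda>n. m div ee m + (24 div ee m)*n)"
  define B2 where "B2 = {n \<in> I. 4 dvd L' n}"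
  define PL where "PL = {p::int. prime p \<and> 5 \<le> p \<and> p^2 \<le> 24*N + 23}"
  define BL where "BL = (\<lambda>p. {n \<in> {1..N}. p^2 dvd m + 24*n})"
  define PM where "PM = {p::int. prime p \<and> 5 \<le> p \<and> 16*p \<le> N}"
  define Bg where "Bg = (\<lambda>p. {n \<in> {1..N}. p^2 dvd gi e (m + 24*n)})"
  define KS where "KS = {1..(81432576::int)}"
  define Sk where "Sk = (\<lambda>k. {n \<in> {1..N}. \<exists>y. gi e (m + 24*n) = k*y^2})"
  define U where "U = Good \<union> B2 \<union> (\<Union>p\<in>PL. BL p) \<union> (\<Union>p\<in>PM. Bg p) \<union> (\<Union>k\<in>KS. Sk k)"
  have finPL: "finite PL" unfolding PL_def by (rule finite_subset[of _ "{0..24*N+23}"]) (auto, metis le_sq order_trans dual_order.trans numeral_le_one_iff semiring_norm(68) le_numeral_extra(4) one_le_numeral order.trans)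
  have finPM: "finite PM" unfolding PM_def by (rule finite_subset[of _ "{0..N}"]) auto
  have finKS: "finite KS" unfolding KS_def by simp
  have cover: "I \<subseteq> U"
  proof
    fix n assume nI: "n \<in> I"
    hence n: "1 \<le> n" "n \<le> N" unfolding I_def by auto
    show "n \<in> U"
    proof (cases "squarefree (delta_m e m n)")
      case True thus ?thesis using nI unfolding U_def Good_def by blast
    next
      case False
      hence "\<not> (\<not> 4 dvd L' n \<and> (\<forall>p. prime p \<and> p \<ge> 5 \<longrightarrow> \<not> p^2 dvd (m + 24*n) \<and> \<not> p^2 dvd gi e (m + 24*n)))"
        using sqf_crit[OF e mm, of n] n unfolding L'_def by auto
      then consider "4 dvd L' n" | p where "prime p" "p \<ge> 5" "p^2 dvd m + 24*n"
        | p where "prime p" "p \<ge> 5" "p^2 dvd gi e (m + 24*n)" by blast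
      thus ?thesis
      proof cases
        case 1 thus ?thesis using nI unfolding U_def B2_def by blast
      next
        case (2 p)
        have "p^2 \<le> m + 24*n" using 2(3) mf(4) n by (intro zdvd_imp_le) auto
        hence "p \<in> PL" using 2 m23 n unfolding PL_def by auto
        moreover have "n \<in> BL p" using 2 n unfolding BL_def by auto
        ultimately show ?thesis unfolding U_def by blast
      next
        case (3 p)
        show ?thesis
        proof (cases "16*p \<le> N")
          case True
          hence "p \<in> PM" using 3 unfolding PM_def by auto
          moreover have "n \<in> Bg p" using 3 n unfolding Bg_def by auto
          ultimately show ?thesis unfolding U_def by blast
        next
          case False
          have p0: "p > 0" using 3 by simp
          have Np: "N < 16*p" using False by simp
          have "\<exists>k\<in>{1..81432576}. \<exists>y. gi e (m + 24*n) = k*y^2"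
            by (rule large_cover[OF e m1 m23 n(1,2) p0 3(3) Np])
          then obtain k where k: "k \<in> {1..81432576}" "\<exists>y. gi e (m + 24*n) = k*y^2" by blast
          hence "n \<in> Sk k" "k \<in> KS" using n unfolding Sk_def KS_def by auto
          thus ?thesis unfolding U_def by blast
        qed
      qed
    qed
  qed
  have finU: "finite U"
  proof -
    have "U \<subseteq> I" unfolding U_def Good_def B2_def BL_def Bg_def Sk_def I_def by auto
    thus ?thesis unfolding I_def by (rule finite_subset) simp
  qed
  have "card I \<le> card U" using cover finU by (rule card_mono[rotated])
  also have "card U \<le> card Good + card B2 + card (\<Union>p\<in>PL. BL p) + card (\<Union>p\<in>PM. Bg p) + card (\<Union>k\<in>KS. Sk k)"
    unfolding U_def by (meson card_Un_le add_mono order_trans le_refl)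
  finally have main: "card I \<le> card Good + card B2 + card (\<Union>p\<in>PL. BL p) + card (\<Union>p\<in>PM. Bg p) + card (\<Union>k\<in>KS. Sk k)" .
  have cI: "card I = nat N" unfolding I_def by simp
  have cB2: "card B2 \<le> nat (N div 4) + 1"
  proof (rule cong_card)
    show "B2 \<subseteq> {1..N}" unfolding B2_def I_def by auto
    show "\<forall>a\<in>B2. \<forall>b\<in>B2. 4 dvd a - b"
    proof (intro ballI)
      fix a b assume ab: "a \<in> B2" "b \<in> B2"
      show "4 dvd a - b"
      proof (cases "idx m = 4")
        case True
        hence "ee m = 8" using mf(7) by simp
        hence "4 dvd m div 8 + 3*a" "4 dvd m div 8 + 3*b" using ab unfolding B2_def L'_def by auto
        thus ?thesis by presburger
      next
        case False
        hence "odd (L' a)" using mf(6) unfolding L'_def by auto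
        thus ?thesis using ab unfolding B2_def by (auto elim: oddE simp: dvd_def)
      qed
    qed
  qed simp
  have cBL: "card (\<Union>p\<in>PL. BL p) \<le> (\<Sum>p\<in>PL. nat (N div p^2) + 1)"
  proof -
    have "card (\<Union>p\<in>PL. BL p) \<le> (\<Sum>p\<in>PL. card (BL p))" by (rule card_UN_le[OF finPL])
    also have "\<dots> \<le> (\<Sum>p\<in>PL. nat (N div p^2) + 1)"
    proof (rule sum_mono)
      fix p assume "p \<in> PL"
      hence "prime p" "p \<ge> 5" unfolding PL_def by auto
      thus "card (BL p) \<le> nat (N div p^2) + 1" unfolding BL_def by (rule BL_card)
    qed
    finally show ?thesis .
  qed
  have cBg: "card (\<Union>p\<in>PM. Bg p) \<le> (\<Sum>p\<in>PM. 2 * (nat (N div p^2) + 1))"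
  proof -
    have "card (\<Union>p\<in>PM. Bg p) \<le> (\<Sum>p\<in>PM. card (Bg p))" by (rule card_UN_le[OF finPM])
    also have "\<dots> \<le> (\<Sum>p\<in>PM. 2 * (nat (N div p^2) + 1))"
    proof (rule sum_mono)
      fix p assume "p \<in> PM"
      hence "prime p" "p \<ge> 5" unfolding PM_def by auto
      thus "card (Bg p) \<le> 2 * (nat (N div p^2) + 1)" unfolding Bg_def by (rule Bg_card[OF e])
    qed
    finally show ?thesis .
  qed
  have cSk: "card (\<Union>k\<in>KS. Sk k) \<le> 81432576 * (j + 11)"
  proof -
    have "card (\<Union>k\<in>KS. Sk k) \<le> (\<Sum>k\<in>KS. card (Sk k))" by (rule card_UN_le[OF finKS])
    also have "\<dots> \<le> (\<Sum>k\<in>KS. j + 11)"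
    proof (rule sum_mono)
      fix k assume "k \<in> KS"
      hence "k \<ge> 1" unfolding KS_def by auto
      thus "card (Sk k) \<le> j + 11" unfolding Sk_def using Sk_card[OF e m1 m23 _ N_def] by blast
    qed
    also have "\<dots> = 81432576 * (j + 11)" unfolding KS_def by simp
    finally show ?thesis .
  qed
  have N0: "N \<ge> 0" using N1 by simp
  have rB2: "real (card B2) \<le> real_of_int N / 4 + 1"
  proof -
    have "real (card B2) \<le> real (nat (N div 4)) + 1" using cB2 by linarith
    also have "real (nat (N div 4)) = real_of_int (N div 4)" using N0 by simp
    also have "\<dots> \<le> real_of_int N / 4" using real_of_int_div4[of N 4] by simp
    finally show ?thesis by simp
  qed
  have PLp: "\<forall>p\<in>PL. prime p \<and> p \<ge> 5" unfolding PL_def by auto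
  have PMp: "\<forall>p\<in>PM. prime p \<and> p \<ge> 5" unfolding PM_def by auto
  have rBL: "real (card (\<Union>p\<in>PL. BL p)) \<le> real_of_int N / 6 + sqrt (24 * real_of_int N + 23) + 1"
  proof -
    have "real (card (\<Union>p\<in>PL. BL p)) \<le> real (\<Sum>p\<in>PL. nat (N div p^2) + 1)" using cBL by linarith
    also have "\<dots> = (\<Sum>p\<in>PL. real (nat (N div p^2))) + real (card PL)" by (simp add: sum.distrib)
    also have "\<dots> \<le> real_of_int N / 6 + (sqrt (real_of_int (24*N + 23)) + 1)"
      using sum_div_bound[OF finPL PLp N0] card_PL[of "24*N+23"] N0 unfolding PL_def by (intro add_mono) auto
    finally show ?thesis by simp
  qed
  have rBg: "real (card (\<Union>p\<in>PM. Bg p)) \<le> real_of_int N / 3 + real_of_int N / 8"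
  proof -
    have "real (card (\<Union>p\<in>PM. Bg p)) \<le> real (\<Sum>p\<in>PM. 2 * (nat (N div p^2) + 1))" using cBg by linarith
    also have "\<dots> = 2 * (\<Sum>p\<in>PM. real (nat (N div p^2))) + 2 * real (card PM)" by (simp add: sum.distrib sum_distrib_left)
    also have "\<dots> \<le> 2 * (real_of_int N / 6) + 2 * (real_of_int N / 16)"
      using sum_div_bound[OF finPM PMp N0] card_PM[OF N0] unfolding PM_def by (intro add_mono) auto
    finally show ?thesis by simp
  qed
  have "real (card (\<Union>k\<in>KS. Sk k)) \<le> real (81432576 * (j + 11))" using cSk by (simp only: of_nat_le_iff)
  hence rSk: "real (card (\<Union>k\<in>KS. Sk k)) \<le> 81432576 * (real j + 11)" by simp
  have "real_of_int N = real (card I)" using cI N0 by simp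
  also have "\<dots> \<le> real (card Good) + real (card B2) + real (card (\<Union>p\<in>PL. BL p)) + real (card (\<Union>p\<in>PM. Bg p)) + real (card (\<Union>k\<in>KS. Sk k))"
    using main by linarith
  finally have "real_of_int N \<le> real (card Good) + 7/8 * real_of_int N + sqrt (24 * real_of_int N + 23) + 2 + 81432576 * (real j + 11)"
    using rB2 rBL rBg rSk by linarith
  thus ?thesis unfolding N_def Good_def I_def by simp
qed

theorem proposition3p3:
  fixes \<epsilon> m :: int
  assumes "\<epsilon> \<in> {1, -1}"
    and "m \<in> {1, 2, 5, 7, 8, 10, 11, 13, 14, 16, 17, 19, 22, 23}"
  shows "infinite {n::int. n > 0 \<and> squarefree (delta_m \<epsilon> m n)} \<and>
    (\<forall>n::int. n \<ge> 0 \<and> squarefree (delta_m \<epsilon> m n) \<longrightarrow>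
       elliptic (E_mn \<epsilon> m n) \<and>
       (\<exists>C P. elliptic C \<and> on_curve C P \<and> point_order C P = 3 \<and> iso_Q (velu3 C P) (E_mn \<epsilon> m n)) \<and>
       semistable (E_mn \<epsilon> m n) \<and>
       good_reduction (E_mn \<epsilon> m n) 3 \<and>
       (\<forall>v::int. prime v \<and> bad_reduction (E_mn \<epsilon> m n) v \<longrightarrow>
          \<not> (3::nat) dvd multiplicity v (min_disc (E_mn \<epsilon> m n))))"
  proof -
  have e': "\<epsilon> = 1 \<or> \<epsilon> = -1" using assms(1) by auto
  define T where "T = {n::int. n > 0 \<and> squarefree (delta_m \<epsilon> m n)}"
  have inf: "infinite T"
  proof
    assume fin: "finite T"
    define c where "c = real (card T)"
    define f where "f = (\<lambda>j::nat. (2::real)^j/8 - sqrt(24*2^j+23) - 2 - 81432576*(real j+11))"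
    have bound: "f j \<le> c" for j
    proof -
      have sub: "{n \<in> {1..2^j}. squarefree (delta_m \<epsilon> m n)} \<subseteq> T" unfolding T_def by auto
      have "card {n \<in> {1..2^j}. squarefree (delta_m \<epsilon> m n)} \<le> card T"
        using sub fin by (rule card_mono[rotated])
      hence "real (card {n \<in> {1..2^j}. squarefree (delta_m \<epsilon> m n)}) \<le> c" unfolding c_def by simp
      moreover note count_good[OF e' assms(2), of j]
      ultimately show ?thesis unfolding f_def by simp
    qed
    have "filterlim f at_top sequentially" unfolding f_def by real_asymp
    hence "eventually (\<lambda>j. f j > c) sequentially" by (simp add: filterlim_at_top_dense)
    then obtain j where "f j > c" by (auto simp: eventually_sequentially)
    thus False using bound[of j] by simp
  qed
  show ?thesis using inf part1[OF assms(1,2)] unfolding T_def by blast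
qed

end
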